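(* Let $n\ge1$ be an integer, $0<h<1$, and let $K$ be a kernel supported on $[-1,1]$, symmetric about $0$, bounded, with $\int_{-1}^1K(x)dx=1$, such that $1-\int_{-2/n}^{2/n}\frac1hK(\frac uh)du\ne0$. For $t\in\mathbb{Z}$ define $$K_n^h(t)=\frac{\int_{|t|/n}^{(|t|+1)/n}\frac1hK(\frac uh)\,du}{1-\int_{-2/n}^{2/n}\frac1hK(\frac uh)\,du}\,\mathbb{1}_{\{|t|\ge2\}}.$$ Then for every integer $i$ with $\lceil nh\rceil\le i\le n-\lceil nh\rceil$ we have $\sum_{j=0}^{n-1}K_n^h(i-j)=1$. *)

theory Defs
  imports "HOL-Analysis.Analysis"
begin

definition Kh :: "(real \<Rightarrow> real) \<Rightarrow> real \<Rightarrow> real \<Rightarrow> real" where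
  "Kh K h u = (1 / h) * K (u / h)"

definition Knh :: "(real \<Rightarrow> real) \<Rightarrow> nat \<Rightarrow> real \<Rightarrow> int \<Rightarrow> real" where
  "Knh K n h t =
     (if \<bar>t\<bar> \<ge> 2 then
        integral {real_of_int \<bar>t\<bar> / real n .. (real_of_int \<bar>t\<bar> + 1) / real n} (Kh K h)
        / (1 - integral {-2 / real n .. 2 / real n} (Kh K h))
      else 0)"

end

theory Submission
  imports Defs
begin

theorem lemma7p1:
  fixes K :: "real \<Rightarrow> real" and n :: nat and h :: real and i :: int
  assumes n_pos: "n \<ge> 1"
    and h_pos: "0 < h" and h_lt1: "h < 1"
    and supp: "\<And>x. \<bar>x\<bar> > 1 \<Longrightarrow> K x = 0"
    and symm: "\<And>x. K (- x) = K x"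
    and bdd: "bounded (range K)"
    and int1: "(K has_integral 1) {-1..1}"
    and denom: "1 - integral {-2 / real n .. 2 / real n} (Kh K h) \<noteq> 0"
    and i_lo: "\<lceil>real n * h\<rceil> \<le> i"
    and i_hi: "i \<le> int n - \<lceil>real n * h\<rceil>"
  shows "(\<Sum>j = 0..<n. Knh K n h (i - int j)) = 1"
proof -
  define g where "g = Kh K h"
  have g0: "g u = 0" if "\<bar>u\<bar> > h" for u
  proof -
    have e: "\<bar>u / h\<bar> = \<bar>u\<bar> / h" using h_pos by (simp add: abs_divide abs_of_pos)
    have "1 < \<bar>u\<bar> / h" using that h_pos by (simp add: less_divide_eq)
    then have "\<bar>u / h\<bar> > 1" using e by linarith
    then show ?thesis using supp by (simp add: g_def Kh_def)
  qed
  have gsym: "g (- u) = g u" for u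
    using symm[of "u/h"] by (simp add: g_def Kh_def)
  have "((\<lambda>x. K ((1/h) * x)) has_integral (1 / \<bar>1/h\<bar>) *\<^sub>R 1) ((\<lambda>x. x / (1/h)) ` {-1..1})"
    by (rule has_integral_stretch_real[OF int1]) (use h_pos in auto)
  moreover have "(\<lambda>x. x / (1/h)) ` {-1..1} = {-h..h}"
  proof -
    have "(\<lambda>x. x / (1/h)) ` {-1..1} = (\<lambda>x. h * x) ` {-1..1}" by (simp add: mult.commute)
    also have "\<dots> = {-h..h}" using h_pos by (simp add: image_mult_atLeastAtMost)
    finally show ?thesis .
  qed
  ultimately have "((\<lambda>x. K (x / h)) has_integral h) {-h..h}"
    using h_pos by simp
  then have "((\<lambda>x. (1/h) *\<^sub>R K (x / h)) has_integral (1/h) *\<^sub>R h) {-h..h}"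
    by (rule has_integral_cmul)
  then have g1: "(g has_integral 1) {-h..h}"
    using h_pos by (simp add: g_def Kh_def [abs_def])
  have g1': "(g has_integral 1) {-x..x}" if "x \<ge> h" for x
    by (rule has_integral_on_superset[OF g1]) (use g0 that in auto)
  have gint: "g integrable_on {a..b}" for a b
  proof -
    have "(g has_integral 1) {min a (-h)..max b h}"
      by (rule has_integral_on_superset[OF g1]) (use g0 in auto)
    then have "g integrable_on {min a (-h)..max b h}" by blast
    then show ?thesis by (rule integrable_subinterval_real) auto
  qed
  define F where "F x = integral {0..x} g" for x
  have Fdiff: "integral {a..b} g = F b - F a" if "0 \<le> a" "a \<le> b" for a b
    using Henstock_Kurzweil_Integration.integral_combine[OF that gint[of 0 b]] by (simp add: F_def)
  have Fsym: "integral {-a..a} g = 2 * F a" if "0 \<le> a" for a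
  proof -
    have "integral {-a..0} g = integral {-a..-0} (\<lambda>x. g (-x))" by (simp add: gsym)
    also have "\<dots> = F a" unfolding F_def by (rule Henstock_Kurzweil_Integration.integral_reflect_real)
    finally have "integral {-a..0} g = F a" .
    moreover have "integral {-a..0} g + integral {0..a} g = integral {-a..a} g"
      by (rule Henstock_Kurzweil_Integration.integral_combine) (use that gint in auto)
    ultimately show ?thesis by (simp add: F_def)
  qed
  have Fh: "F x = 1/2" if "x \<ge> h" for x
    using Fsym[of x] g1'[OF that] h_pos that by (simp add: integral_unique)
  define D where "D = 1 - 2 * F (2 / real n)"
  have Deq: "integral {-2 / real n .. 2 / real n} (Kh K h) = 2 * F (2 / real n)"
    using Fsym[of "2 / real n"] by (simp add: g_def)
  have Dnz: "D \<noteq> 0" using denom Deq by (simp add: D_def)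
  have small: "2 / real n < h"
  proof (rule ccontr)
    assume "\<not> ?thesis"
    then have "F (2 / real n) = 1/2" using Fh by simp
    then show False using Dnz by (simp add: D_def)
  qed
  have nh: "real n * h > 2" using small n_pos by (simp add: field_simps)
  have "(3::int) \<le> \<lceil>real n * h\<rceil>" using nh by linarith
  then have "0 \<le> i" using i_lo by linarith
  then obtain p where ip: "i = int p" using nonneg_int_cases by blast
  have p3: "3 \<le> p" and pn: "p + 3 \<le> n" and ph: "real n * h \<le> real p"
    and pnh: "real n * h \<le> real n - real p"
  proof -
    have "(3::int) \<le> \<lceil>real n * h\<rceil>" using nh by linarith
    then show "3 \<le> p" "p + 3 \<le> n" using i_lo i_hi ip by linarith+
    show "real n * h \<le> real p" using i_lo ip le_of_int_ceiling[of "real n * h"] by linarith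
    show "real n * h \<le> real n - real p" using i_hi ip le_of_int_ceiling[of "real n * h"] by linarith
  qed
  have npos: "real n > 0" using n_pos by simp
  define psi where "psi j = F ((real p + 1 - real j) / real n)" for j
  define phi where "phi j = F ((real j - real p) / real n)" for j
  have Deq': "1 - integral {-2 / real n .. 2 / real n} g = D"
    using Deq by (simp add: D_def g_def)
  have termA: "Knh K n h (i - int j) = (psi j - psi (Suc j)) / D" if "j < p - 1" for j
  proof -
    have jp: "real j + 2 \<le> real p" using that by linarith
    have abs: "\<bar>i - int j\<bar> = int p - int j" using that ip by simp
    have ge: "\<bar>i - int j\<bar> \<ge> 2" using that ip by simp
    have r: "real_of_int \<bar>i - int j\<bar> = real p - real j" using abs by simp
    have a0: "0 \<le> (real p - real j) / real n" using jp npos by simp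
    have a1: "(real p - real j) / real n \<le> (real p - real j + 1) / real n"
      using npos by (simp add: divide_right_mono)
    have e1: "psi j = F ((real p - real j + 1) / real n)" unfolding psi_def by (simp add: algebra_simps)
    have e2: "psi (Suc j) = F ((real p - real j) / real n)" unfolding psi_def by (simp add: algebra_simps)
    have "Knh K n h (i - int j) = integral {(real p - real j) / real n .. (real p - real j + 1) / real n} g / D"
      unfolding Knh_def using ge by (simp only: if_True r Deq' flip: g_def)
    also have "\<dots> = (psi j - psi (Suc j)) / D" using Fdiff[OF a0 a1] e1 e2 by simp
    finally show ?thesis .
  qed
  have termB: "Knh K n h (i - int j) = (phi (Suc j) - phi j) / D" if "p + 2 \<le> j" for j
  proof -
    have jp: "real p + 2 \<le> real j" using that by linarith
    have abs: "\<bar>i - int j\<bar> = int j - int p" using that ip by simp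
    have ge: "\<bar>i - int j\<bar> \<ge> 2" using that ip by simp
    have r: "real_of_int \<bar>i - int j\<bar> = real j - real p" using abs by simp
    have a0: "0 \<le> (real j - real p) / real n" using jp npos by simp
    have a1: "(real j - real p) / real n \<le> (real j - real p + 1) / real n"
      using npos by (simp add: divide_right_mono)
    have e1: "phi (Suc j) = F ((real j - real p + 1) / real n)" unfolding phi_def by (simp add: algebra_simps)
    have e2: "phi j = F ((real j - real p) / real n)" unfolding phi_def by simp
    have "Knh K n h (i - int j) = integral {(real j - real p) / real n .. (real j - real p + 1) / real n} g / D"
      unfolding Knh_def using ge by (simp only: if_True r Deq' flip: g_def)
    also have "\<dots> = (phi (Suc j) - phi j) / D" using Fdiff[OF a0 a1] e1 e2 by simp
    finally show ?thesis .
  qed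
  have termC: "Knh K n h (i - int j) = 0" if "p - 1 \<le> j" "j < p + 2" for j
  proof -
    have "\<bar>i - int j\<bar> < 2" using that ip p3 by auto
    then show ?thesis by (simp add: Knh_def)
  qed
  have split: "(\<Sum>j = 0..<n. Knh K n h (i - int j)) =
      (\<Sum>j = 0..<p-1. Knh K n h (i - int j)) + (\<Sum>j = p-1..<p+2. Knh K n h (i - int j))
      + (\<Sum>j = p+2..<n. Knh K n h (i - int j))"
  proof -
    define f where "f j = Knh K n h (i - int j)" for j
    have 1: "sum f {0..<p-1} + sum f {p-1..<p+2} = sum f {0..<p+2}"
      by (rule sum.atLeastLessThan_concat) (use p3 in auto)
    have 2: "sum f {0..<p+2} + sum f {p+2..<n} = sum f {0..<n}"
      by (rule sum.atLeastLessThan_concat) (use pn in auto)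
    show ?thesis using 1 2 unfolding f_def by simp
  qed
  have sA: "(\<Sum>j = 0..<p-1. Knh K n h (i - int j)) = (psi 0 - psi (p - 1)) / D"
  proof -
    have "(\<Sum>j = 0..<p-1. Knh K n h (i - int j)) = (\<Sum>j<p-1. (psi j - psi (Suc j)) / D)"
      by (simp add: atLeast0LessThan termA)
    also have "\<dots> = (\<Sum>j<p-1. psi j - psi (Suc j)) / D" by (simp add: sum_divide_distrib)
    also have "\<dots> = (psi 0 - psi (p - 1)) / D" by (simp add: sum_lessThan_telescope')
    finally show ?thesis .
  qed
  have sB: "(\<Sum>j = p+2..<n. Knh K n h (i - int j)) = (phi n - phi (p+2)) / D"
  proof -
    have "(\<Sum>j = p+2..<n. Knh K n h (i - int j)) = (\<Sum>j = p+2..<n. (phi (Suc j) - phi j) / D)"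
      by (simp add: termB)
    also have "\<dots> = (\<Sum>j = p+2..<n. phi (Suc j) - phi j) / D" by (simp add: sum_divide_distrib)
    also have "\<dots> = (phi n - phi (p+2)) / D" using pn by (simp add: sum_Suc_diff')
    finally show ?thesis .
  qed
  have sC: "(\<Sum>j = p-1..<p+2. Knh K n h (i - int j)) = 0"
    by (rule sum.neutral) (simp add: termC)
  have v1: "psi 0 = 1/2"
    unfolding psi_def by (rule Fh) (use ph npos in \<open>simp add: field_simps\<close>)
  have v2: "phi n = 1/2"
    unfolding phi_def by (rule Fh) (use pnh npos in \<open>simp add: field_simps\<close>)
  have v3: "psi (p - 1) = F (2 / real n)" unfolding psi_def using p3 by (simp add: of_nat_diff)
  have v4: "phi (p + 2) = F (2 / real n)" unfolding phi_def by simp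
  have "(\<Sum>j = 0..<n. Knh K n h (i - int j)) = (psi 0 - psi (p - 1)) / D + 0 + (phi n - phi (p+2)) / D"
    by (simp only: split sA sB sC)
  also have "\<dots> = ((1/2 - F (2 / real n)) + (1/2 - F (2 / real n))) / D"
    by (simp only: v1 v2 v3 v4 add_divide_distrib add_0_right)
  also have "\<dots> = D / D" by (simp add: D_def)
  also have "\<dots> = 1" using Dnz by simp
  finally show ?thesis .
qed

end
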